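(* Consider a two-armed bandit and the Chernoff-Overlap sampling rule run without elimination, i.e. after pulling each arm once, at each time $t$ an arm in $\arg\min_{a\in\{1,2\}}\sqrt{\hat c_a(t)}\,N_a(t)$ is pulled. Then \[ \mathbb{P}\left(\lim_{t\to\infty}\frac{\hat c_a(t)N_a(t)}{J(t)}=\frac{\sqrt{c_a}}{\sqrt{c_1}+\sqrt{c_2}}\ \text{ for all } a\in\{1,2\}\right)=1. \]
   Context: Two arms $\{1,2\}$; arm $a$ has a cost distribution with mean $c_a$ supported in $[\ell,1]$, $\ell>0$ (rewards are irrelevant here). At round $t$ the pulled arm $A_t$ yields a cost $C_t$ drawn from its cost distribution, independently of the past. $N_a(t)$ is the number of pulls of arm $a$ up to $t$, $\hat c_a(t)$ the empirical mean cost of arm $a$, and $J(t)=\sum_{k\le t}C_k$. *)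

theory Defs
  imports "HOL-Probability.Probability"
begin

text \<open>Two-armed bandit, arms 1 and 2, rounds t = 1, 2, 3, ...  X a k w : cost of the (k+1)-th pull of arm a
  (the usual "stack of samples" model: the k-th pull of arm a returns X a k,
  samples independent and identically distributed per arm).\<close>

definition npulls :: "(nat \<Rightarrow> 'w \<Rightarrow> nat) \<Rightarrow> nat \<Rightarrow> nat \<Rightarrow> 'w \<Rightarrow> nat" where
  "npulls A a t w = card {s \<in> {1..t}. A s w = a}"

definition cost :: "(nat \<Rightarrow> 'w \<Rightarrow> nat) \<Rightarrow> (nat \<Rightarrow> nat \<Rightarrow> 'w \<Rightarrow> real) \<Rightarrow> nat \<Rightarrow> 'w \<Rightarrow> real" where
  "cost A X s w = X (A s w) (npulls A (A s w) (s - 1) w) w"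

definition emp_cost :: "(nat \<Rightarrow> 'w \<Rightarrow> nat) \<Rightarrow> (nat \<Rightarrow> nat \<Rightarrow> 'w \<Rightarrow> real) \<Rightarrow> nat \<Rightarrow> nat \<Rightarrow> 'w \<Rightarrow> real" where
  "emp_cost A X a t w =
     (\<Sum>s\<in>{s \<in> {1..t}. A s w = a}. cost A X s w) / real (npulls A a t w)"

definition total_cost :: "(nat \<Rightarrow> 'w \<Rightarrow> nat) \<Rightarrow> (nat \<Rightarrow> nat \<Rightarrow> 'w \<Rightarrow> real) \<Rightarrow> nat \<Rightarrow> 'w \<Rightarrow> real" where
  "total_cost A X t w = (\<Sum>s\<in>{1..t}. cost A X s w)"

definition co_rule :: "(nat \<Rightarrow> 'w \<Rightarrow> nat) \<Rightarrow> (nat \<Rightarrow> nat \<Rightarrow> 'w \<Rightarrow> real) \<Rightarrow> 'w \<Rightarrow> bool" where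
  "co_rule A X w \<longleftrightarrow>
     {A 1 w, A 2 w} = {1, 2} \<and>
     (\<forall>t\<ge>2. A (Suc t) w \<in> {1, 2} \<and>
        (\<forall>b\<in>{1, 2::nat}.
           sqrt (emp_cost A X (A (Suc t) w) t w) * real (npulls A (A (Suc t) w) t w)
           \<le> sqrt (emp_cost A X b t w) * real (npulls A b t w)))"

end

theory Submission
  imports Defs
begin

lemma (in prob_space) indep_vars_reindex:
  assumes ind: "indep_vars M' X (g ` I)" and inj: "inj_on g I"
  shows "indep_vars (\<lambda>i. M' (g i)) (\<lambda>i. X (g i)) I"
proof -
  have rv: "\<forall>i\<in>g ` I. random_variable (M' i) (X i)"
    and iss: "indep_sets (\<lambda>i. sigma_sets (space M) {X i -` A \<inter> space M |A. A \<in> sets (M' i)}) (g ` I)"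
    using ind unfolding indep_vars_def by auto
  show ?thesis unfolding indep_vars_def
  proof (intro conjI ballI indep_setsI)
    fix i assume "i \<in> I" then show "random_variable (M' (g i)) (X (g i))" using rv by auto
  next
    fix i assume "i \<in> I"
    then show "sigma_sets (space M) {X (g i) -` A \<inter> space M |A. A \<in> sets (M' (g i))} \<subseteq> events"
      using iss unfolding indep_sets_def by auto
  next
    fix B J assume J: "J \<noteq> {}" "J \<subseteq> I" "finite J"
      and B: "\<forall>j\<in>J. B j \<in> sigma_sets (space M) {X (g j) -` A \<inter> space M |A. A \<in> sets (M' (g j))}"
    define h where "h = the_inv_into J g"
    have injJ: "inj_on g J" using inj J by (auto intro: inj_on_subset)
    have hg: "h (g j) = j" if "j \<in> J" for j using the_inv_into_f_f[OF injJ that] h_def by simp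
    have "prob (\<Inter>y\<in>g ` J. B (h y)) = (\<Prod>y\<in>g ` J. prob (B (h y)))"
      using J B hg by (intro indep_setsD[OF iss]) auto
    moreover have "(\<Inter>y\<in>g ` J. B (h y)) = (\<Inter>j\<in>J. B j)" using hg by auto
    moreover have "(\<Prod>y\<in>g ` J. prob (B (h y))) = (\<Prod>j\<in>J. prob (B j))"
      using hg by (subst prod.reindex[OF injJ]) auto
    ultimately show "prob (\<Inter>j\<in>J. B j) = (\<Prod>j\<in>J. prob (B j))" by simp
  qed
qed

lemma slln_bounded:
  fixes Y :: "nat \<Rightarrow> 'w \<Rightarrow> real"
  assumes P: "prob_space M"
    and ind: "prob_space.indep_vars M (\<lambda>_. borel) Y UNIV"
    and dis: "\<And>k. distr M borel (Y k) = distr M borel (Y 0)"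
    and bd: "\<And>k w. w \<in> space M \<Longrightarrow> 0 \<le> Y k w \<and> Y k w \<le> 1"
  shows "AE w in M. ((\<lambda>n. (\<Sum>k<n. Y k w) / real n) \<longlongrightarrow> prob_space.expectation M (Y 0)) sequentially"
proof -
  interpret prob_space M by (rule P)
  define \<mu> where "\<mu> = expectation (Y 0)"
  have rv[measurable]: "Y k \<in> borel_measurable M" for k
    using ind unfolding indep_vars_def by auto
  have E: "expectation (Y k) = \<mu>" for k
  proof -
    have "expectation (Y k) = integral\<^sup>L (distr M borel (Y k)) (\<lambda>x. x)"
      using integral_distr[OF rv[of k] measurable_ident_sets[OF refl]] by (rule sym)
    also have "\<dots> = integral\<^sup>L (distr M borel (Y 0)) (\<lambda>x. x)" unfolding dis[of k] ..
    also have "\<dots> = \<mu>" unfolding \<mu>_def using integral_distr[OF rv[of 0] measurable_ident_sets[OF refl]] .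
    finally show ?thesis .
  qed
  have bound: "prob {w\<in>space M. \<epsilon> * real n \<le> \<bar>(\<Sum>k<n. Y k w) - real n * \<mu>\<bar>} \<le> 2 * exp (-2 * \<epsilon>^2) ^ n"
    if eps: "\<epsilon> > 0" for \<epsilon> n
  proof (cases "n = 0")
    case True
    then show ?thesis by (simp add: prob_space)
  next
    case False
    interpret H: Hoeffding_ineq M "{..<n}" Y "\<lambda>_. 0" "\<lambda>_. 1" "\<Sum>i<n. expectation (Y i)"
    proof unfold_locales
      show "indep_vars (\<lambda>_. borel) Y {..<n}"
        by (rule indep_vars_subset[OF ind]) auto
    next
      fix i show "AE x in M. Y i x \<in> {0..1}" using bd by (intro AE_I2) auto
    qed simp
    have "prob {w\<in>space M. \<bar>(\<Sum>k<n. Y k w) - (\<Sum>i<n. expectation (Y i))\<bar> \<ge> \<epsilon> * real n}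
          \<le> 2 * exp (-2 * (\<epsilon> * real n)^2 / (\<Sum>i<n. (1 - 0)^2))"
      by (rule H.Hoeffding_ineq_abs_ge) (use eps False in simp_all)
    also have "-2 * (\<epsilon> * real n)^2 / (\<Sum>i<n. (1 - 0)^2) = real n * (-2 * \<epsilon>^2)"
      using False by (simp add: power2_eq_square field_simps)
    also have "exp (real n * (-2 * \<epsilon>^2)) = exp (-2 * \<epsilon>^2) ^ n"
      by (rule exp_of_nat_mult)
    finally show ?thesis by (simp add: E)
  qed
  have one: "AE w in M. eventually (\<lambda>n. \<bar>(\<Sum>k<n. Y k w) / real n - \<mu>\<bar> < \<epsilon>) sequentially"
    if eps: "\<epsilon> > 0" for \<epsilon>
  proof -
    define B where "B n = {w\<in>space M. \<epsilon> * real n \<le> \<bar>(\<Sum>k<n. Y k w) - real n * \<mu>\<bar>}" for n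
    have Bm: "B n \<in> sets M" for n unfolding B_def by measurable
    have q: "exp (-2 * \<epsilon>^2) < 1" using eps by simp
    have "summable (\<lambda>n. 2 * exp (-2 * \<epsilon>^2) ^ n)"
      using q by (intro summable_mult summable_geometric) simp
    then have sm: "summable (\<lambda>n. measure M (B n))"
      by (rule summable_comparison_test'[where N=0]) (use bound[OF eps] in \<open>auto simp: B_def\<close>)
    have "AE w in M. eventually (\<lambda>n. w \<in> space M - B n) sequentially"
      by (rule borel_cantelli_AE1[OF Bm _ sm]) (simp add: emeasure_eq_measure)
    then show ?thesis
    proof (rule AE_mp, intro AE_I2 impI)
      fix w assume w: "w \<in> space M" and ev: "eventually (\<lambda>n. w \<in> space M - B n) sequentially"
      show "eventually (\<lambda>n. \<bar>(\<Sum>k<n. Y k w) / real n - \<mu>\<bar> < \<epsilon>) sequentially"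
        using eventually_conj[OF ev eventually_ge_at_top[of "1::nat"]]
      proof (rule eventually_mono)
        fix n :: nat assume h: "w \<in> space M - B n \<and> 1 \<le> n"
        then have "\<bar>(\<Sum>k<n. Y k w) - real n * \<mu>\<bar> < \<epsilon> * real n" using w unfolding B_def by auto
        moreover have "(\<Sum>k<n. Y k w) / real n - \<mu> = ((\<Sum>k<n. Y k w) - real n * \<mu>) / real n"
          using h by (simp add: field_simps)
        ultimately show "\<bar>(\<Sum>k<n. Y k w) / real n - \<mu>\<bar> < \<epsilon>"
          using h by (simp add: abs_divide pos_divide_less_eq)
      qed
    qed
  qed
  have "AE w in M. \<forall>m::nat. eventually (\<lambda>n. \<bar>(\<Sum>k<n. Y k w) / real n - \<mu>\<bar> < 1 / Suc m) sequentially"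
    by (subst AE_all_countable) (intro allI one, simp)
  then show ?thesis
  proof (rule AE_mp, intro AE_I2 impI)
    fix w assume h: "\<forall>m::nat. eventually (\<lambda>n. \<bar>(\<Sum>k<n. Y k w) / real n - \<mu>\<bar> < 1 / Suc m) sequentially"
    show "((\<lambda>n. (\<Sum>k<n. Y k w) / real n) \<longlongrightarrow> expectation (Y 0)) sequentially"
      unfolding tendsto_iff \<mu>_def[symmetric]
    proof (intro allI impI)
      fix e :: real assume e: "e > 0"
      obtain m where m: "inverse (real (Suc m)) < e" using reals_Archimedean[OF e] by auto
      show "eventually (\<lambda>n. dist ((\<Sum>k<n. Y k w) / real n) \<mu> < e) sequentially"
        using h[rule_format, of m]
        by (rule eventually_mono) (use m in \<open>auto simp: dist_real_def divide_inverse\<close>)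
    qed
  qed
qed

locale det =
  fixes A :: "nat \<Rightarrow> 'w \<Rightarrow> nat" and X :: "nat \<Rightarrow> nat \<Rightarrow> 'w \<Rightarrow> real" and w :: 'w and l :: real
  assumes rule: "co_rule A X w" and lpos: "l > 0"
    and bnd: "\<And>a k. a \<in> {1,2} \<Longrightarrow> l \<le> X a k w \<and> X a k w \<le> 1"
begin

definition N where "N a t = npulls A a t w"
definition S where "S a n = (\<Sum>k<n. X a k w)"
definition f where "f a t = S a (N a t) * real (N a t)"
definition rho :: "nat \<Rightarrow> real" where "rho n = (1 + 1/(l*n)) * (1 + 1/n)"

lemma A12: "{A 1 w, A 2 w} = {1, 2}"
  using rule unfolding co_rule_def by blast

lemma A1ne2: "A 1 w \<noteq> A 2 w"
proof
  assume "A 1 w = A 2 w"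
  then have "{A 1 w} = {1,2::nat}" using A12 by simp
  then have "(1::nat) \<in> {A 1 w}" "(2::nat) \<in> {A 1 w}" by auto
  then show False by auto
qed

lemma A_in: "t \<ge> 1 \<Longrightarrow> A t w \<in> {1,2}"
proof -
  assume t: "t \<ge> 1"
  show ?thesis
  proof (cases "t \<le> 2")
    case True
    then have "t = 1 \<or> t = 2" using t by auto
    then show ?thesis using A12 by auto
  next
    case False
    then have "t = Suc (t - 1)" "t - 1 \<ge> 2" by auto
    then show ?thesis using rule unfolding co_rule_def by metis
  qed
qed

lemma N_Suc: "N a (Suc t) = N a t + (if A (Suc t) w = a then 1 else 0)"
proof -
  have "{s \<in> {1..Suc t}. A s w = a} = {s \<in> {1..t}. A s w = a} \<union> (if A (Suc t) w = a then {Suc t} else {})"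
    by (auto simp: le_Suc_eq)
  then show ?thesis unfolding N_def npulls_def by auto
qed

lemma N_0: "N a 0 = 0"
  unfolding N_def npulls_def by simp

lemma N_mono: "t \<le> t' \<Longrightarrow> N a t \<le> N a t'"
  by (rule lift_Suc_mono_le[where f="N a"]) (auto simp: N_Suc)

lemma N_2: "a \<in> {1,2} \<Longrightarrow> N a 2 = 1"
proof -
  assume a: "a \<in> {1,2}"
  have "N a 2 = (if A 1 w = a then 1 else 0) + (if A 2 w = a then 1 else 0)"
    using N_Suc[of a 0] N_Suc[of a 1] N_0 by (simp add: numeral_2_eq_2)
  moreover have "A 1 w \<in> {1,2}" "A 2 w \<in> {1,2}" using A12 by auto
  ultimately show ?thesis using a A1ne2 by auto
qed

lemma N_ge1: "a \<in> {1,2} \<Longrightarrow> t \<ge> 2 \<Longrightarrow> N a t \<ge> 1"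
  using N_mono[of 2 t a] N_2 by auto

lemma N_sum: "N 1 t + N 2 t = t"
proof (induction t)
  case 0 then show ?case by (simp add: N_0)
next
  case (Suc t)
  have "A (Suc t) w \<in> {1,2}" by (rule A_in) simp
  then show ?case using Suc by (auto simp: N_Suc)
qed

lemma sum_cost: "(\<Sum>s\<in>{s \<in> {1..t}. A s w = a}. cost A X s w) = S a (N a t)"
proof (induction t)
  case 0 then show ?case by (simp add: N_0 S_def)
next
  case (Suc t)
  show ?case
  proof (cases "A (Suc t) w = a")
    case True
    have e: "{s \<in> {1..Suc t}. A s w = a} = insert (Suc t) {s \<in> {1..t}. A s w = a}"
      using True by (auto simp: le_Suc_eq)
    have "(\<Sum>s\<in>{s \<in> {1..Suc t}. A s w = a}. cost A X s w) = cost A X (Suc t) w + S a (N a t)"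
      unfolding e using Suc by (subst sum.insert) auto
    also have "cost A X (Suc t) w = X a (N a t) w"
      unfolding cost_def N_def using True by simp
    finally show ?thesis using True by (simp add: N_Suc S_def)
  next
    case False
    have e: "{s \<in> {1..Suc t}. A s w = a} = {s \<in> {1..t}. A s w = a}"
      using False by (auto simp: le_Suc_eq)
    show ?thesis unfolding e using Suc False by (simp add: N_Suc)
  qed
qed

lemma emp_eq: "emp_cost A X a t w = S a (N a t) / real (N a t)"
  unfolding emp_cost_def sum_cost N_def[symmetric] by simp

lemma emp_mult: "emp_cost A X a t w * real (N a t) = S a (N a t)"
  unfolding emp_eq by (cases "N a t = 0") (auto simp: S_def)

lemma total: "total_cost A X t w = S 1 (N 1 t) + S 2 (N 2 t)"
proof -
  have e: "{1..t} = {s \<in> {1..t}. A s w = 1} \<union> {s \<in> {1..t}. A s w = 2}"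
  proof -
    have "\<forall>s\<in>{1..t}. A s w = 1 \<or> A s w = 2" using A_in by auto
    then show ?thesis by auto
  qed
  have "total_cost A X t w = (\<Sum>s\<in>{s \<in> {1..t}. A s w = 1}. cost A X s w) + (\<Sum>s\<in>{s \<in> {1..t}. A s w = 2}. cost A X s w)"
    unfolding total_cost_def by (subst e, subst sum.union_disjoint) auto
  then show ?thesis by (simp only: sum_cost)
qed

lemma S_bounds: "a \<in> {1,2} \<Longrightarrow> l * n \<le> S a n \<and> S a n \<le> n"
proof -
  assume a: "a \<in> {1,2}"
  have "(\<Sum>k<n. l) \<le> S a n" unfolding S_def by (rule sum_mono) (use bnd[OF a] in auto)
  moreover have "S a n \<le> (\<Sum>k<n. 1)" unfolding S_def by (rule sum_mono) (use bnd[OF a] in auto)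
  ultimately show ?thesis by (simp add: mult.commute)
qed

lemma S_nonneg: "a \<in> {1,2} \<Longrightarrow> 0 \<le> S a n"
  using S_bounds[of a n] lpos by (smt (verit) mult_nonneg_nonneg of_nat_0_le_iff)

lemma key: "sqrt (emp_cost A X a t w) * real (N a t) = sqrt (f a t)"
proof (cases "N a t = 0")
  case True then show ?thesis by (simp add: f_def)
next
  case False
  have "sqrt (f a t) = sqrt (emp_cost A X a t w * (real (N a t) * real (N a t)))"
    unfolding emp_eq f_def using False by (simp add: field_simps)
  also have "\<dots> = sqrt (emp_cost A X a t w) * real (N a t)"
    by (simp add: real_sqrt_mult)
  finally show ?thesis by simp
qed

lemma choose: "t \<ge> 2 \<Longrightarrow> b \<in> {1,2} \<Longrightarrow> f (A (Suc t) w) t \<le> f b t"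
  using rule unfolding co_rule_def N_def[symmetric] key by auto

lemma f_step: "a \<in> {1,2} \<Longrightarrow> N a t \<ge> 1 \<Longrightarrow> A (Suc t) w = a \<Longrightarrow> f a (Suc t) \<le> rho (N a t) * f a t"
proof -
  assume a: "a \<in> {1,2}" and n1: "N a t \<ge> 1" and p: "A (Suc t) w = a"
  define n where "n = N a t"
  have n: "n \<ge> 1" using n1 n_def by simp
  have Sn: "S a (Suc n) = S a n + X a n w" unfolding S_def by simp
  have lb: "l * n \<le> S a n" using S_bounds[OF a] by simp
  have "X a n w * (l*n) \<le> 1 * (l*n)"
    using bnd[OF a, of n] lpos by (intro mult_right_mono) auto
  then have "X a n w * (l*n) \<le> S a n" using lb by linarith
  then have "X a n w \<le> S a n / (l * n)"
    using lpos n by (simp add: pos_le_divide_eq)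
  then have "(S a n + X a n w) * (n + 1) \<le> (S a n + S a n / (l * n)) * (n + 1)"
    by (intro mult_right_mono) auto
  also have "\<dots> = rho n * (S a n * n)"
    unfolding rho_def using lpos n by (simp add: field_simps)
  finally show ?thesis
    unfolding f_def N_Suc using p Sn n_def by simp
qed

lemma f_same: "A (Suc t) w \<noteq> a \<Longrightarrow> f a (Suc t) = f a t"
  unfolding f_def by (simp add: N_Suc)

lemma f_mono: "a \<in> {1,2} \<Longrightarrow> f a t \<le> f a (Suc t)"
proof (cases "A (Suc t) w = a")
  case True
  assume a: "a \<in> {1,2}"
  have "S a (N a t) \<le> S a (Suc (N a t))" unfolding S_def using bnd[OF a] lpos
    by simp (smt (verit))
  then show ?thesis unfolding f_def N_Suc using True S_nonneg[OF a]
    by (simp add: mult_mono)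
qed (simp add: f_same)

lemma rho_nonneg: "rho n \<ge> 0"
  unfolding rho_def using lpos by simp

lemma inv: "t \<ge> 2 \<Longrightarrow> b \<in> {1,2} \<Longrightarrow> N b t \<ge> 2 \<Longrightarrow> f b t \<le> rho (N b t - 1) * f (3 - b) t"
proof (induction t arbitrary: b rule: dec_induct)
  case base
  then show ?case using N_2 by auto
next
  case (step t)
  have ob: "3 - b \<in> {1,2}" "3 - b \<noteq> b" using step by auto
  have a: "A (Suc t) w \<in> {1,2}" by (rule A_in) simp
  show ?case
  proof (cases "A (Suc t) w = b")
    case True
    have Nb: "N b (Suc t) = N b t + 1" using True by (simp add: N_Suc)
    have "f b (Suc t) \<le> rho (N b t) * f b t"
      using f_step[OF step(4) N_ge1[OF step(4) step(1)] True] .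
    also have "\<dots> \<le> rho (N b t) * f (3 - b) t"
      using choose[OF step(1) ob(1)] True rho_nonneg by (simp add: mult_left_mono)
    also have "f (3 - b) t = f (3 - b) (Suc t)"
      using f_same[of t "3 - b"] True ob by simp
    finally show ?thesis using Nb by simp
  next
    case False
    have Nb: "N b (Suc t) = N b t" using False by (simp add: N_Suc)
    have "f b (Suc t) = f b t" using f_same False by simp
    also have "\<dots> \<le> rho (N b t - 1) * f (3 - b) t"
      using step Nb by simp
    also have "\<dots> \<le> rho (N b t - 1) * f (3 - b) (Suc t)"
      using f_mono[OF ob(1)] rho_nonneg by (simp add: mult_left_mono)
    finally show ?thesis using Nb by simp
  qed
qed

lemma rho_le: "n \<ge> 1 \<Longrightarrow> rho n \<le> 2 * (1 + 1/l)"
proof -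
  assume n: "n \<ge> 1"
  have "1/(l*n) \<le> 1/l" using lpos n by (simp add: divide_simps)
  moreover have "1/real n \<le> 1" using n by simp
  ultimately have "(1 + 1/(l*n)) * (1 + 1/n) \<le> (1 + 1/l) * 2"
    using lpos by (intro mult_mono) auto
  then show ?thesis unfolding rho_def by simp
qed

lemma rho_ge1: "rho n \<ge> 1"
proof -
  have h1: "1 \<le> 1 + 1/(l*n)" using lpos by simp
  have h2: "1 \<le> 1 + 1/real n" by simp
  have "1 * 1 \<le> (1 + 1/(l*n)) * (1 + 1/real n)"
    by (rule mult_mono[OF h1 h2]) (use h1 in linarith, simp)
  then show ?thesis unfolding rho_def by simp
qed

lemma f_upper: "a \<in> {1,2} \<Longrightarrow> f a t \<le> real (N a t) ^ 2"
  unfolding f_def power2_eq_square using S_bounds[of a "N a t"] by (simp add: mult_right_mono)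

lemma f_lower: "a \<in> {1,2} \<Longrightarrow> l * real (N a t) ^ 2 \<le> f a t"
  unfolding f_def power2_eq_square using S_bounds[of a "N a t"]
  by (metis mult.assoc mult_right_mono of_nat_0_le_iff)

lemma N_other: "a \<in> {1,2} \<Longrightarrow> N a t + N (3 - a) t = t"
  using N_sum[of t] by (auto simp: add.commute)

lemma N_inf: "a \<in> {1,2} \<Longrightarrow> filterlim (N a) at_top sequentially"
proof -
  assume a: "a \<in> {1,2}"
  define b where "b = 3 - a"
  have b: "b \<in> {1,2}" using a b_def by auto
  define C where "C = 2 * (1 + 1/l)"
  have C: "C \<ge> 0" using lpos C_def by simp
  show ?thesis unfolding filterlim_at_top
  proof
    fix m :: nat
    define K where "K = nat \<lceil>C * m^2 / l\<rceil>"
    have K: "C * m^2 / l \<le> K" unfolding K_def by linarith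
    show "eventually (\<lambda>t. m \<le> N a t) sequentially"
      unfolding eventually_sequentially
    proof (intro exI allI impI)
      fix t assume t: "2 + m + K \<le> t"
      show "m \<le> N a t"
      proof (rule ccontr)
        assume "\<not> m \<le> N a t"
        then have lt: "N a t < m" by simp
        have Nb: "N b t \<ge> 2 + K" using N_other[OF a, of t] t lt unfolding b_def by linarith
        have "l * real (N b t)^2 \<le> f b t" by (rule f_lower[OF b])
        also have "\<dots> \<le> rho (N b t - 1) * f (3 - b) t"
          by (rule inv) (use t Nb b in auto)
        also have "3 - b = a" using a b_def by auto
        also have "rho (N b t - 1) * f a t \<le> C * f a t"
          unfolding C_def using Nb f_lower[OF a, of t] lpos
          by (intro mult_right_mono rho_le) (auto intro: order_trans[rotated])
        also have "\<dots> \<le> C * real (N a t)^2"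
          using f_upper[OF a] C by (intro mult_left_mono) auto
        also have "\<dots> \<le> C * real m^2"
          using lt C by (intro mult_left_mono power_mono) auto
        finally have "l * real (N b t)^2 \<le> C * real m^2" .
        then have "real (N b t)^2 \<le> C * m^2 / l" using lpos by (simp add: field_simps)
        moreover have "real (N b t) \<le> real (N b t)^2" using Nb by (simp add: power2_eq_square)
        ultimately have "real (N b t) \<le> K" using K by linarith
        then show False using Nb by linarith
      qed
    qed
  qed
qed

lemma rho_lim: "(rho \<longlongrightarrow> 1) sequentially"
proof -
  have "((\<lambda>n. (1 + inverse l * inverse (real n)) * (1 + inverse (real n))) \<longlongrightarrow> (1 + inverse l * 0) * (1 + 0)) sequentially"
    by (intro tendsto_intros lim_inverse_n)
  then show ?thesis unfolding rho_def by (simp add: divide_inverse mult.commute)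
qed

lemma ev_N: "x \<in> {1,2} \<Longrightarrow> eventually (\<lambda>t. k \<le> N x t) sequentially"
  using N_inf unfolding filterlim_at_top by blast

lemma rhoN_lim: "x \<in> {1,2} \<Longrightarrow> ((\<lambda>t. rho (N x t - 1)) \<longlongrightarrow> 1) sequentially"
proof -
  assume x: "x \<in> {1,2}"
  have "filterlim (\<lambda>t. N x t - 1) at_top sequentially"
    unfolding filterlim_at_top
  proof
    fix Z :: nat
    show "eventually (\<lambda>t. Z \<le> N x t - 1) sequentially"
      using ev_N[OF x, of "Suc Z"] by (rule eventually_mono) simp
  qed
  then show ?thesis by (rule filterlim_compose[OF rho_lim])
qed

lemma ratio: "a \<in> {1,2} \<Longrightarrow> ((\<lambda>t. f (3 - a) t / f a t) \<longlongrightarrow> 1) sequentially"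
proof -
  assume a: "a \<in> {1,2}"
  define b where "b = 3 - a"
  have b: "b \<in> {1,2}" "3 - b = a" using a b_def by auto
  have ev: "eventually (\<lambda>t. 2 \<le> t \<and> 2 \<le> N a t \<and> 2 \<le> N b t) sequentially"
    by (intro eventually_conj ev_N a b eventually_ge_at_top)
  have up: "eventually (\<lambda>t. f b t / f a t \<le> rho (N b t - 1)) sequentially"
    using ev
  proof (rule eventually_mono)
    fix t assume h: "2 \<le> t \<and> 2 \<le> N a t \<and> 2 \<le> N b t"
    have "0 < l * real (N a t)^2" using h lpos by simp
    then have "f a t > 0" using f_lower[OF a, of t] by linarith
    moreover have "f b t \<le> rho (N b t - 1) * f a t" using inv[of t b] h b by simp
    ultimately show "f b t / f a t \<le> rho (N b t - 1)" by (simp add: divide_simps)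
  qed
  have lo: "eventually (\<lambda>t. 1 / rho (N a t - 1) \<le> f b t / f a t) sequentially"
    using ev
  proof (rule eventually_mono)
    fix t assume h: "2 \<le> t \<and> 2 \<le> N a t \<and> 2 \<le> N b t"
    have "0 < l * real (N a t)^2" using h lpos by simp
    then have "f a t > 0" using f_lower[OF a, of t] by linarith
    moreover have "f a t \<le> rho (N a t - 1) * f b t" using inv[of t a] h b a b_def by simp
    moreover have "rho (N a t - 1) > 0" using rho_ge1[of "N a t - 1"] by simp
    ultimately show "1 / rho (N a t - 1) \<le> f b t / f a t" by (simp add: divide_simps mult.commute)
  qed
  have "((\<lambda>t. 1 / rho (N a t - 1)) \<longlongrightarrow> 1 / 1) sequentially"
    by (intro tendsto_intros rhoN_lim a) simp
  then have "((\<lambda>t. f b t / f a t) \<longlongrightarrow> 1) sequentially"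
    using tendsto_sandwich[OF lo up] rhoN_lim[OF b(1)] by simp
  then show ?thesis using b_def by simp
qed

lemma main:
  assumes slln: "\<And>x. x \<in> {1,2} \<Longrightarrow> ((\<lambda>n. S x n / real n) \<longlongrightarrow> c x) sequentially"
    and a: "a \<in> {1,2::nat}"
  shows "((\<lambda>t. S a (N a t) / (S 1 (N 1 t) + S 2 (N 2 t))) \<longlongrightarrow> sqrt (c a) / (sqrt (c 1) + sqrt (c 2))) sequentially"
proof -
  define b where "b = 3 - a"
  have b: "b \<in> {1,2}" "3 - b = a" using a b_def by auto
  have g: "((\<lambda>t. S x (N x t) / real (N x t)) \<longlongrightarrow> c x) sequentially" if x: "x \<in> {1,2}" for x
    using filterlim_compose[OF slln[OF x] N_inf[OF x]] .
  have cl: "l \<le> c x" if x: "x \<in> {1,2}" for x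
  proof (rule tendsto_lowerbound[OF slln[OF x]])
    show "eventually (\<lambda>n. l \<le> S x n / real n) sequentially"
      using eventually_ge_at_top[of "1::nat"]
    proof (rule eventually_mono)
      fix n :: nat assume "1 \<le> n"
      then show "l \<le> S x n / real n" using S_bounds[OF x, of n] by (simp add: pos_le_divide_eq)
    qed
  qed simp
  have ca: "c a > 0" "c b > 0" using cl[OF a] cl[OF b(1)] lpos by auto
  have lim1: "((\<lambda>t. sqrt ((f b t / f a t) * ((S b (N b t) / real (N b t)) / (S a (N a t) / real (N a t)))))
      \<longlongrightarrow> sqrt (1 * (c b / c a))) sequentially"
    using ratio[OF a] g[OF a] g[OF b(1)] ca unfolding b_def
    by (intro tendsto_intros) auto
  have lim2: "((\<lambda>t. 1 / (1 + sqrt ((f b t / f a t) * ((S b (N b t) / real (N b t)) / (S a (N a t) / real (N a t))))))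
      \<longlongrightarrow> 1 / (1 + sqrt (1 * (c b / c a)))) sequentially"
    by (rule tendsto_divide[OF tendsto_const tendsto_add[OF tendsto_const lim1]])
       (smt (verit) real_sqrt_ge_zero ca divide_pos_pos)
  have val: "1 / (1 + sqrt (1 * (c b / c a))) = sqrt (c a) / (sqrt (c 1) + sqrt (c 2))"
  proof -
    have "sqrt (c 1) + sqrt (c 2) = sqrt (c a) + sqrt (c b)" using a b_def by auto
    moreover have "sqrt (c a) > 0" using ca by simp
    ultimately show ?thesis by (simp add: real_sqrt_divide field_simps)
  qed
  have ev: "eventually (\<lambda>t. 1 \<le> N a t \<and> 1 \<le> N b t) sequentially"
    by (intro eventually_conj ev_N a b)
  have eq: "eventually (\<lambda>t. 1 / (1 + sqrt ((f b t / f a t) * ((S b (N b t) / real (N b t)) / (S a (N a t) / real (N a t)))))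
     = S a (N a t) / (S 1 (N 1 t) + S 2 (N 2 t))) sequentially"
    using ev
  proof (rule eventually_mono)
    fix t assume h: "1 \<le> N a t \<and> 1 \<le> N b t"
    define p where "p = S a (N a t)"
    define q where "q = S b (N b t)"
    define u where "u = real (N a t)"
    define v where "v = real (N b t)"
    have u: "u > 0" and v: "v > 0" using h u_def v_def by auto
    have p: "p > 0" using S_bounds[OF a, of "N a t"] lpos u unfolding p_def u_def
      by (smt (verit) mult_pos_pos)
    have q: "q > 0" using S_bounds[OF b(1), of "N b t"] lpos v unfolding q_def v_def
      by (smt (verit) mult_pos_pos)
    have "(f b t / f a t) * ((S b (N b t) / real (N b t)) / (S a (N a t) / real (N a t))) = (q / p)^2"
      unfolding f_def p_def[symmetric] q_def[symmetric] u_def[symmetric] v_def[symmetric]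
      using u v p q by (simp add: field_simps power2_eq_square)
    then have sq: "sqrt ((f b t / f a t) * ((S b (N b t) / real (N b t)) / (S a (N a t) / real (N a t)))) = q / p"
      using p q by simp
    have sm: "S 1 (N 1 t) + S 2 (N 2 t) = p + q" unfolding p_def q_def b_def using a by auto
    have fin: "1 / (1 + q / p) = p / (p + q)" using p q by (simp add: field_simps)
    show "1 / (1 + sqrt ((f b t / f a t) * ((S b (N b t) / real (N b t)) / (S a (N a t) / real (N a t)))))
     = S a (N a t) / (S 1 (N 1 t) + S 2 (N 2 t))"
      by (subst sq, subst sm, fold p_def, rule fin)
  qed
  show ?thesis using tendsto_cong[OF eq] lim2 val by simp
qed


lemma final:
  assumes slln: "\<And>x. x \<in> {1,2} \<Longrightarrow> ((\<lambda>n. (\<Sum>k<n. X x k w) / real n) \<longlongrightarrow> c x) sequentially"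
  shows "\<forall>a\<in>{1, 2::nat}.
           ((\<lambda>t. emp_cost A X a t w * real (npulls A a t w) / total_cost A X t w)
              \<longlongrightarrow> sqrt (c a) / (sqrt (c 1) + sqrt (c 2))) sequentially"
proof
  fix a :: nat assume a: "a \<in> {1,2}"
  have "((\<lambda>t. S a (N a t) / (S 1 (N 1 t) + S 2 (N 2 t))) \<longlongrightarrow> sqrt (c a) / (sqrt (c 1) + sqrt (c 2))) sequentially"
    by (rule main[OF _ a]) (use slln in \<open>simp add: S_def\<close>)
  then show "((\<lambda>t. emp_cost A X a t w * real (npulls A a t w) / total_cost A X t w)
              \<longlongrightarrow> sqrt (c a) / (sqrt (c 1) + sqrt (c 2))) sequentially"
    unfolding N_def[symmetric] emp_mult total .
qed

end

theorem lemma8: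
  fixes M :: "'w measure"
    and X :: "nat \<Rightarrow> nat \<Rightarrow> 'w \<Rightarrow> real"
    and A :: "nat \<Rightarrow> 'w \<Rightarrow> nat"
    and c :: "nat \<Rightarrow> real"
    and l :: real
  assumes "prob_space M"
    and "l > 0"
    and "prob_space.indep_vars M (\<lambda>_. borel) (\<lambda>(a, k). X a k) ({1, 2} \<times> UNIV)"
    and "\<And>a k. a \<in> {1, 2} \<Longrightarrow> distr M borel (X a k) = distr M borel (X a 0)"
    and "\<And>a k w. a \<in> {1, 2} \<Longrightarrow> w \<in> space M \<Longrightarrow> l \<le> X a k w \<and> X a k w \<le> 1"
    and "\<And>a. a \<in> {1, 2} \<Longrightarrow> prob_space.expectation M (X a 0) = c a"
    and "\<And>w. w \<in> space M \<Longrightarrow> co_rule A X w"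
  shows "AE w in M. \<forall>a\<in>{1, 2::nat}.
           ((\<lambda>t. emp_cost A X a t w * real (npulls A a t w) / total_cost A X t w)
              \<longlongrightarrow> sqrt (c a) / (sqrt (c 1) + sqrt (c 2))) sequentially"
proof -
  interpret prob_space M by (rule assms(1))
  have one: "AE w in M. ((\<lambda>n. (\<Sum>k<n. X a k w) / real n) \<longlongrightarrow> c a) sequentially"
    if a: "a \<in> {1,2}" for a
  proof -
    have ind0: "indep_vars (\<lambda>_. borel) (\<lambda>(a, k). X a k) ((\<lambda>k. (a, k)) ` UNIV)"
      by (rule indep_vars_subset[OF assms(3)]) (use a in auto)
    have "indep_vars (\<lambda>_. borel) (\<lambda>k. (\<lambda>(a, k). X a k) (a, k)) UNIV"
      by (rule indep_vars_reindex[OF ind0]) (auto simp: inj_on_def)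
    then have ind: "indep_vars (\<lambda>_. borel) (X a) UNIV" by simp
    have "AE w in M. ((\<lambda>n. (\<Sum>k<n. X a k w) / real n) \<longlongrightarrow> expectation (X a 0)) sequentially"
    proof (rule slln_bounded[OF assms(1) ind])
      show "distr M borel (X a k) = distr M borel (X a 0)" for k by (rule assms(4)[OF a])
      show "0 \<le> X a k w \<and> X a k w \<le> 1" if "w \<in> space M" for k w
        using assms(5)[OF a that, of k] assms(2) by auto
    qed
    then show ?thesis using assms(6)[OF a] by simp
  qed
  have "AE w in M. \<forall>x\<in>{1,2::nat}. ((\<lambda>n. (\<Sum>k<n. X x k w) / real n) \<longlongrightarrow> c x) sequentially"
    using one[of 1] one[of 2] by (auto elim!: AE_mp intro!: AE_I2)
  then show ?thesis
  proof (rule AE_mp, intro AE_I2 impI)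
    fix w assume w: "w \<in> space M"
      and h: "\<forall>x\<in>{1,2::nat}. ((\<lambda>n. (\<Sum>k<n. X x k w) / real n) \<longlongrightarrow> c x) sequentially"
    interpret D: det A X w l
      by unfold_locales (use assms(2,5,7) w in auto)
    show "\<forall>a\<in>{1, 2::nat}.
           ((\<lambda>t. emp_cost A X a t w * real (npulls A a t w) / total_cost A X t w)
              \<longlongrightarrow> sqrt (c a) / (sqrt (c 1) + sqrt (c 2))) sequentially"
      by (rule D.final) (use h in auto)
  qed
qed

end
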